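(* Let $G$ be an abelian group that is torsion-free or cyclic of prime order. Let $M$ be a matroid over $G$ and $N$ a sparse paving matroid over $G$, both of the same rank $n$, such that $|E(M)|<|E(N)|-1$. If $0\notin E(N)$, then $M$ is matched to $N$.
   Context: A matroid over $G$ is a matroid $M$ whose finite ground set $E(M)$ is a subset of $G$; all matroids are assumed loopless. A matroid of rank $n$ is paving if every $(n-1)$-element subset of its ground set is independent; it is sparse paving if both it and its dual matroid are paving. For matroids $M,N$ over $G$ with $r(M)=r(N)=n>0$ and bases $\mathcal{M}=\{a_1,\dots,a_n\}$ of $M$ and $\mathcal{N}=\{b_1,\dots,b_n\}$ of $N$, $\mathcal{M}$ is matched to $\mathcal{N}$ if there is a permutation $\pi\in S_n$ with $a_i+b_{\pi(i)}\notin E(M)$ for all $i$. $M$ is matched to $N$ if for every basis $\mathcal{M}$ of $M$ there exists a basis $\mathcal{N}$ of $N$ such that $\mathcal{M}$ is matched to $\mathcal{N}$. *)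

theory Defs
  imports "HOL-Computational_Algebra.Primes"
begin

definition matroid :: "'a set \<Rightarrow> 'a set set \<Rightarrow> bool" where
  "matroid E \<B> \<longleftrightarrow> finite E \<and> \<B> \<noteq> {} \<and> (\<forall>B\<in>\<B>. B \<subseteq> E) \<and>
     (\<forall>B1\<in>\<B>. \<forall>B2\<in>\<B>. \<forall>x\<in>B1 - B2. \<exists>y\<in>B2 - B1. insert y (B1 - {x}) \<in> \<B>)"

definition indep :: "'a set set \<Rightarrow> 'a set \<Rightarrow> bool" where
  "indep \<B> I \<longleftrightarrow> (\<exists>B\<in>\<B>. I \<subseteq> B)"

definition loopless :: "'a set \<Rightarrow> 'a set set \<Rightarrow> bool" where
  "loopless E \<B> \<longleftrightarrow> (\<forall>e\<in>E. indep \<B> {e})"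

definition has_rank :: "'a set set \<Rightarrow> nat \<Rightarrow> bool" where
  "has_rank \<B> n \<longleftrightarrow> (\<forall>B\<in>\<B>. card B = n)"

definition dual_bases :: "'a set \<Rightarrow> 'a set set \<Rightarrow> 'a set set" where
  "dual_bases E \<B> = (\<lambda>B. E - B) ` \<B>"

definition paving :: "'a set \<Rightarrow> 'a set set \<Rightarrow> nat \<Rightarrow> bool" where
  "paving E \<B> n \<longleftrightarrow> (\<forall>S. S \<subseteq> E \<and> card S = n - 1 \<longrightarrow> indep \<B> S)"

definition sparse_paving :: "'a set \<Rightarrow> 'a set set \<Rightarrow> nat \<Rightarrow> bool" where
  "sparse_paving E \<B> n \<longleftrightarrow> paving E \<B> n \<and> paving E (dual_bases E \<B>) (card E - n)"

definition basis_matched :: "'a::ab_group_add set \<Rightarrow> 'a set \<Rightarrow> 'a set \<Rightarrow> bool" where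
  "basis_matched EM BM BN \<longleftrightarrow> (\<exists>\<pi>. bij_betw \<pi> BM BN \<and> (\<forall>a\<in>BM. a + \<pi> a \<notin> EM))"

definition matched :: "'a::ab_group_add set \<Rightarrow> 'a set set \<Rightarrow> 'a set set \<Rightarrow> bool" where
  "matched EM \<B>M \<B>N \<longleftrightarrow> (\<forall>BM\<in>\<B>M. \<exists>BN\<in>\<B>N. basis_matched EM BM BN)"

definition natmul :: "nat \<Rightarrow> 'a::ab_group_add \<Rightarrow> 'a" where
  "natmul k x = ((+) x ^^ k) 0"

definition torsion_free_group :: "'a::ab_group_add itself \<Rightarrow> bool" where
  "torsion_free_group _ \<longleftrightarrow> (\<forall>x::'a. \<forall>k::nat. k > 0 \<and> natmul k x = 0 \<longrightarrow> x = 0)"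

definition cyclic_prime_order_group :: "'a::ab_group_add itself \<Rightarrow> bool" where
  "cyclic_prime_order_group _ \<longleftrightarrow> finite (UNIV :: 'a set) \<and> prime (card (UNIV :: 'a set)) \<and>
     (\<exists>g::'a. \<forall>x. \<exists>k. x = natmul k g)"

end

theory Submission imports Defs "HOL-Algebra.Coset" begin

definition addgrp :: "'a::ab_group_add monoid" where
  "addgrp = \<lparr>carrier = UNIV, mult = (+), one = 0\<rparr>"

lemma addgrp_group: "group (addgrp :: 'a::ab_group_add monoid)"
proof (rule groupI)
  fix x :: 'a
  show "\<exists>y\<in>carrier addgrp. y \<otimes>\<^bsub>addgrp\<^esub> x = \<one>\<^bsub>addgrp\<^esub>"
    by (rule bexI[of _ "- x"]) (simp_all add: addgrp_def)
qed (simp_all add: addgrp_def add.assoc)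

lemma stab_p:
  fixes X :: "'a::ab_group_add set" and d :: 'a
  assumes fin: "finite (UNIV :: 'a set)" and pr: "prime (card (UNIV :: 'a set))"
    and ne: "X \<noteq> {}" and st: "\<forall>x\<in>X. x + d \<in> X" and d0: "d \<noteq> 0"
  shows "X = UNIV"
proof -
  define H where "H = {h::'a. \<forall>x\<in>X. x + h \<in> X}"
  interpret group "addgrp :: 'a monoid" by (rule addgrp_group)
  have finX: "finite X" by (rule finite_subset[OF subset_UNIV fin])
  have neg: "- h \<in> H" if "h \<in> H" for h
  proof -
    have sub: "(\<lambda>x. x + h) ` X \<subseteq> X" using that unfolding H_def by blast
    have "card ((\<lambda>x. x + h) ` X) = card X" by (rule card_image) (auto simp: inj_on_def)
    then have eq: "(\<lambda>x. x + h) ` X = X" using card_subset_eq[OF finX sub] by simp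
    show ?thesis unfolding H_def
    proof (rule CollectI, rule ballI)
      fix x assume "x \<in> X"
      then have "x \<in> (\<lambda>x. x + h) ` X" using eq by simp
      then obtain y where "y \<in> X" "x = y + h" by blast
      then show "x + - h \<in> X" by simp
    qed
  qed
  have inv_eq: "inv\<^bsub>addgrp\<^esub> h = - h" for h :: 'a
    by (rule inv_equality) (auto simp: addgrp_def)
  have sg: "subgroup H addgrp"
  proof (rule subgroupI)
    show "H \<subseteq> carrier addgrp" by (simp add: addgrp_def)
    show "H \<noteq> {}" using H_def by (auto intro!: exI[of _ 0])
    show "inv\<^bsub>addgrp\<^esub> a \<in> H" if "a \<in> H" for a using neg[OF that] inv_eq by simp
    show "a \<otimes>\<^bsub>addgrp\<^esub> b \<in> H" if "a \<in> H" "b \<in> H" for a b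
      using that by (auto simp: H_def addgrp_def add.assoc[symmetric])
  qed
  have "card (rcosets\<^bsub>addgrp\<^esub> H) * card H = card (UNIV :: 'a set)" using group.lagrange[OF addgrp_group sg] by (simp add: Coset.order_def addgrp_def)
  then have dv: "card H dvd card (UNIV :: 'a set)" by (metis dvd_triv_right)
  have "{0, d} \<subseteq> H" using st H_def by auto
  then have "card {0, d} \<le> card H" using fin by (intro card_mono) (auto intro: finite_subset)
  then have "2 \<le> card H" using d0 by simp
  moreover have "card H = 1 \<or> card H = card (UNIV :: 'a set)" using pr dv by (simp add: prime_nat_iff)
  ultimately have "card H = card (UNIV :: 'a set)" by auto
  then have "H = UNIV" using card_subset_eq[OF fin subset_UNIV] by blast
  obtain x0 where "x0 \<in> X" using ne by auto
  have "z \<in> X" for z :: 'a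
  proof -
    have "z - x0 \<in> H" using \<open>H = UNIV\<close> by simp
    then have "x0 + (z - x0) \<in> X" using \<open>x0 \<in> X\<close> H_def by blast
    then show "z \<in> X" by simp
  qed
  then show ?thesis by blast
qed

lemma natmul_0[simp]: "natmul 0 x = 0" by (simp add: natmul_def)
lemma natmul_Suc: "natmul (Suc k) x = x + natmul k x" by (simp add: natmul_def)
lemma natmul_add: "natmul (a + b) x = natmul a x + natmul b x"
  by (induction a) (simp_all add: natmul_Suc add.assoc)

lemma stab_tf:
  fixes X :: "'a::ab_group_add set" and d :: 'a
  assumes tf: "torsion_free_group TYPE('a)" and fin: "finite X"
    and ne: "X \<noteq> {}" and st: "\<forall>x\<in>X. x + d \<in> X"
  shows "d = 0"
proof (rule ccontr)
  assume d0: "d \<noteq> 0"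
  obtain x0 where x0: "x0 \<in> X" using ne by auto
  define f where "f k = x0 + natmul k d" for k
  have inX: "f k \<in> X" for k
  proof (induction k)
    case 0 then show ?case using x0 by (simp add: f_def)
  next
    case (Suc k)
    have "f (Suc k) = f k + d" by (simp add: f_def natmul_Suc algebra_simps)
    then show ?case using Suc st by simp
  qed
  have "inj f"
  proof (rule injI)
    fix a b assume eq: "f a = f b"
    show "a = b"
    proof (rule ccontr)
      assume "a \<noteq> b"
      then consider "a < b" | "b < a" by linarith
      then show False
      proof cases
        case 1
        then have "natmul b d = natmul a d + natmul (b - a) d" by (metis natmul_add le_add_diff_inverse less_imp_le)
        then have "natmul (b - a) d = 0" using eq by (simp add: f_def)
        moreover have "b - a > 0" using 1 by simp
        ultimately show False using tf d0 unfolding torsion_free_group_def by blast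
      next
        case 2
        then have "natmul a d = natmul b d + natmul (a - b) d" by (metis natmul_add le_add_diff_inverse less_imp_le)
        then have "natmul (a - b) d = 0" using eq by (simp add: f_def)
        moreover have "a - b > 0" using 2 by simp
        ultimately show False using tf d0 unfolding torsion_free_group_def by blast
      qed
    qed
  qed
  moreover have "range f \<subseteq> X" using inX by auto
  ultimately have "finite (UNIV :: nat set)" using fin by (meson finite_imageD finite_subset)
  then show False by simp
qed

definition grpcond :: "'a::ab_group_add set \<Rightarrow> bool" where
  "grpcond Z \<longleftrightarrow> torsion_free_group TYPE('a) \<or>
     (finite (UNIV :: 'a set) \<and> prime (card (UNIV :: 'a set)) \<and> Z \<noteq> UNIV)"

lemma CD:
  fixes X Y Z :: "'a::ab_group_add set"
  assumes g: "grpcond Z" and fZ: "finite Z" and fX: "finite X" and fY: "finite Y"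
    and nX: "X \<noteq> {}" and nY: "Y \<noteq> {}" and sub: "\<forall>x\<in>X. \<forall>y\<in>Y. x + y \<in> Z"
  shows "card X + card Y \<le> card Z + 1"
  using fX fY nX nY sub
proof (induction "card Y" arbitrary: X Y rule: less_induct)
  case less
  show ?case
  proof (cases "card Y = 1")
    case True
    then obtain y where Y: "Y = {y}" using card_1_singletonE by blast
    have "(\<lambda>x. x + y) ` X \<subseteq> Z" using less.prems Y by auto
    moreover have "card ((\<lambda>x. x + y) ` X) = card X" by (rule card_image) (auto simp: inj_on_def)
    ultimately have "card X \<le> card Z" using fZ by (metis card_mono)
    then show ?thesis using Y by simp
  next
    case False
    then have c2: "card Y \<ge> 2" using less.prems by (metis One_nat_def Suc_1 Suc_leI card_gt_0_iff le_neq_implies_less)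
    show ?thesis
    proof (cases "\<exists>x\<in>X. \<exists>y\<in>Y. \<exists>y'\<in>Y. y' + (x - y) \<notin> X")
      case True
      then obtain x y y' where xy: "x \<in> X" "y \<in> Y" "y' \<in> Y" "y' + (x - y) \<notin> X" by blast
      define e where "e = x - y"
      define X' where "X' = X \<union> (\<lambda>t. t + e) ` Y"
      define Y' where "Y' = {t \<in> Y. t + e \<in> X}"
      have yY': "y \<in> Y'" using xy by (simp add: Y'_def e_def)
      have "Y' \<subset> Y" using xy by (auto simp: Y'_def e_def)
      then have lt: "card Y' < card Y" using less.prems by (simp add: psubset_card_mono)
      have fX': "finite X'" using less.prems by (simp add: X'_def)
      have fY': "finite Y'" using less.prems by (simp add: Y'_def)
      have sub': "\<forall>u\<in>X'. \<forall>v\<in>Y'. u + v \<in> Z"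
      proof (intro ballI)
        fix u v assume u: "u \<in> X'" and v: "v \<in> Y'"
        show "u + v \<in> Z"
        proof (cases "u \<in> X")
          case True then show ?thesis using v less.prems by (auto simp: Y'_def)
        next
          case False
          then obtain t where t: "t \<in> Y" "u = t + e" using u by (auto simp: X'_def)
          have "u + v = (v + e) + t" using t by (simp add: algebra_simps)
          moreover have "v + e \<in> X" using v by (simp add: Y'_def)
          ultimately show ?thesis using t less.prems(5) by metis
        qed
      qed
      have IH: "card X' + card Y' \<le> card Z + 1"
        using less.hyps[OF lt fX' fY' _ _ sub'] yY' less.prems by (auto simp: X'_def)
      have ci: "card ((\<lambda>t. t + e) ` Y) = card Y" by (rule card_image) (auto simp: inj_on_def)
      have "X \<inter> (\<lambda>t. t + e) ` Y = (\<lambda>t. t + e) ` Y'" by (auto simp: Y'_def)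
      then have ci2: "card (X \<inter> (\<lambda>t. t + e) ` Y) = card Y'"
        by (simp add: card_image inj_on_def)
      have "card X + card ((\<lambda>t. t + e) ` Y) = card X' + card (X \<inter> (\<lambda>t. t + e) ` Y)"
        unfolding X'_def using less.prems by (intro card_Un_Int) auto
      then have "card X + card Y = card X' + card Y'" using ci ci2 by simp
      then show ?thesis using IH by simp
    next
      case False
      then have all: "\<forall>x\<in>X. \<forall>y\<in>Y. \<forall>y'\<in>Y. y' + (x - y) \<in> X" by blast
      obtain y1 y2 where y12: "y1 \<in> Y" "y2 \<in> Y" "y1 \<noteq> y2"
        using c2 by (metis One_nat_def Suc_1 card_le_Suc0_iff_eq less.prems(2) not_less_eq_eq)
      define d where "d = y2 - y1"
      have d0: "d \<noteq> 0" using y12 by (simp add: d_def)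
      have st: "\<forall>x\<in>X. x + d \<in> X"
      proof
        fix x assume "x \<in> X"
        then have "y2 + (x - y1) \<in> X" using all y12 by blast
        then show "x + d \<in> X" by (simp add: d_def algebra_simps)
      qed
      from g show ?thesis unfolding grpcond_def
      proof (elim disjE conjE)
        assume "torsion_free_group TYPE('a)"
        then have "d = 0" using stab_tf less.prems st by blast
        then show ?thesis using d0 by simp
      next
        assume f: "finite (UNIV :: 'a set)" and p: "prime (card (UNIV :: 'a set))" and zU: "Z \<noteq> UNIV"
        have XU: "X = UNIV" using stab_p[OF f p less.prems(3) st d0] .
        have "z \<in> Z" for z
        proof -
          have "(z - y1) + y1 \<in> Z" using less.prems y12 XU by blast
          then show "z \<in> Z" by simp
        qed
        then have "Z = UNIV" by blast
        then show ?thesis using zU by simp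
      qed
    qed
  qed
qed

lemma hall:
  fixes A :: "'a set" and S :: "'a \<Rightarrow> 'b set"
  assumes "finite A" "finite U" "\<forall>a\<in>A. S a \<subseteq> U" "\<forall>X\<subseteq>A. card X \<le> card (\<Union>(S ` X))"
  shows "\<exists>f. inj_on f A \<and> (\<forall>a\<in>A. f a \<in> S a)"
  using assms
proof (induction "card A" arbitrary: A S rule: less_induct)
  case less
  have finU: "finite (\<Union>(S ` X))" if "X \<subseteq> A" for X
    using less.prems that by (meson UN_subset_iff finite_subset subsetD)
  show ?case
  proof (cases "A = {}")
    case True then show ?thesis by auto
  next
    case Ane: False
    show ?thesis
    proof (cases "\<forall>X. X \<subseteq> A \<and> X \<noteq> {} \<and> X \<noteq> A \<longrightarrow> card X < card (\<Union>(S ` X))")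
      case True
      obtain a where a: "a \<in> A" using Ane by auto
      have "card {a} \<le> card (S a)" proof -
        have "card {a} \<le> card (\<Union>(S ` {a}))" using less.prems(4) a by blast
        then show ?thesis by simp
      qed
      then have "S a \<noteq> {}" by auto
      then obtain b where b: "b \<in> S a" by auto
      define A' where "A' = A - {a}"
      define S' where "S' x = S x - {b}" for x
      have lt: "card A' < card A" using a less.prems(1) unfolding A'_def by (rule card_Diff1_less[rotated])
      have hall': "\<forall>X\<subseteq>A'. card X \<le> card (\<Union>(S' ` X))"
      proof (intro allI impI)
        fix X assume X: "X \<subseteq> A'"
        show "card X \<le> card (\<Union>(S' ` X))"
        proof (cases "X = {}")
          case True then show ?thesis by simp
        next
          case False
          have "X \<noteq> A" using X a by (auto simp: A'_def)
          moreover have XA: "X \<subseteq> A" using X by (auto simp: A'_def)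
          ultimately have "card X < card (\<Union>(S ` X))" using True False by blast
          moreover have "\<Union>(S' ` X) = \<Union>(S ` X) - {b}" by (auto simp: S'_def)
          moreover have "card (\<Union>(S ` X) - {b}) \<ge> card (\<Union>(S ` X)) - 1"
            by (simp add: card_Diff_singleton_if)
          ultimately show ?thesis by simp
        qed
      qed
      obtain f' where f': "inj_on f' A'" "\<forall>x\<in>A'. f' x \<in> S' x"
        using less.hyps[OF lt _ less.prems(2) _ hall'] less.prems(1,3) by (auto simp: A'_def S'_def)
      define f where "f = f'(a := b)"
      have "inj_on f A'" using f' by (auto simp: f_def inj_on_def A'_def)
      moreover have "f a \<notin> f ` A'" using f' by (auto simp: f_def S'_def A'_def)
      moreover have "A = insert a A'" using a by (auto simp: A'_def)
      ultimately have "inj_on f A" by auto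
      moreover have "\<forall>x\<in>A. f x \<in> S x" using f' b by (auto simp: f_def S'_def A'_def)
      ultimately show ?thesis by blast
    next
      case False
      then have "\<exists>X. X \<subseteq> A \<and> X \<noteq> {} \<and> X \<noteq> A \<and> \<not> card X < card (\<Union>(S ` X))" by blast
      then obtain X where X: "X \<subseteq> A" "X \<noteq> {}" "X \<noteq> A" "card X \<ge> card (\<Union>(S ` X))"
        unfolding not_less by blast
      have fX: "finite X" using X less.prems(1) finite_subset by blast
      have ltX: "card X < card A" using X less.prems(1) by (simp add: psubset_card_mono)
      have h1: "\<forall>a\<in>X. S a \<subseteq> U" using X(1) less.prems(3) by blast
      have h2: "\<forall>Y\<subseteq>X. card Y \<le> card (\<Union>(S ` Y))"
      proof (intro allI impI)
        fix Y assume "Y \<subseteq> X"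
        then have "Y \<subseteq> A" using X(1) by blast
        then show "card Y \<le> card (\<Union>(S ` Y))" using less.prems(4) by blast
      qed
      obtain f1 where f1: "inj_on f1 X" "\<forall>x\<in>X. f1 x \<in> S x"
        using less.hyps[OF ltX fX less.prems(2) h1 h2] by blast
      define A2 where "A2 = A - X"
      define S2 where "S2 x = S x - \<Union>(S ` X)" for x
      have lt2: "card A2 < card A" using X less.prems(1) unfolding A2_def
        by (metis Diff_subset Int_absorb1 card_Diff_subset_Int card_gt_0_iff diff_less finite_subset subset_empty)
      have hall2: "\<forall>Y\<subseteq>A2. card Y \<le> card (\<Union>(S2 ` Y))"
      proof (intro allI impI)
        fix Y assume Y: "Y \<subseteq> A2"
        have XY: "X \<union> Y \<subseteq> A" using X Y by (auto simp: A2_def)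
        have eq: "\<Union>(S2 ` Y) = \<Union>(S ` (X \<union> Y)) - \<Union>(S ` X)" by (auto simp: S2_def)
        have "card (\<Union>(S ` (X \<union> Y)) - \<Union>(S ` X)) = card (\<Union>(S ` (X \<union> Y))) - card (\<Union>(S ` X))"
          by (rule card_Diff_subset) (use finU X in auto)
        moreover have "card (X \<union> Y) \<le> card (\<Union>(S ` (X \<union> Y)))" using less.prems(4) XY by blast
        moreover have "card (X \<union> Y) = card X + card Y"
          by (rule card_Un_disjoint) (use fX Y less.prems(1) finite_subset in \<open>auto simp: A2_def\<close>)
        ultimately show "card Y \<le> card (\<Union>(S2 ` Y))" unfolding eq using X(4) by linarith
      qed
      obtain f2 where f2: "inj_on f2 A2" "\<forall>x\<in>A2. f2 x \<in> S2 x"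
        using less.hyps[OF lt2 _ less.prems(2) _ hall2] less.prems(1,3) by (auto simp: A2_def S2_def)
      define f where "f x = (if x \<in> X then f1 x else f2 x)" for x
      have "inj_on f A"
        unfolding inj_on_def
      proof (intro ballI impI)
        fix x y assume xy: "x \<in> A" "y \<in> A" "f x = f y"
        show "x = y"
        proof (cases "x \<in> X"; cases "y \<in> X")
          assume "x \<in> X" "y \<in> X" then show ?thesis using xy f1 by (auto simp: f_def inj_on_def)
        next
          assume "x \<notin> X" "y \<notin> X" then show ?thesis using xy f2 by (auto simp: f_def inj_on_def A2_def)
        next
          assume a: "x \<in> X" "y \<notin> X"
          have "f x \<in> \<Union>(S ` X)" using a f1 by (auto simp: f_def)
          moreover have "y \<in> A2" using a xy by (simp add: A2_def)
          then have "f y \<notin> \<Union>(S ` X)" using a f2 by (simp add: f_def S2_def)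
          ultimately show ?thesis using xy by simp
        next
          assume a: "x \<notin> X" "y \<in> X"
          have "f y \<in> \<Union>(S ` X)" using a f1 by (auto simp: f_def)
          moreover have "x \<in> A2" using a xy by (simp add: A2_def)
          then have "f x \<notin> \<Union>(S ` X)" using a f2 by (simp add: f_def S2_def)
          ultimately show ?thesis using xy by simp
        qed
      qed
      moreover have "\<forall>x\<in>A. f x \<in> S x" using f1 f2 by (auto simp: f_def A2_def S2_def)
      ultimately show ?thesis by blast
    qed
  qed
qed

lemma sp_exchange:
  assumes mat: "matroid EN \<B>" and rk: "has_rank \<B> n" and sp: "sparse_paving EN \<B> n"
    and BE: "B \<subseteq> EN" and cB: "card B = n" and nB: "B \<notin> \<B>" and b: "b \<in> B"
    and c: "c \<in> EN" "c \<notin> B"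
  shows "insert c (B - {b}) \<in> \<B>"
proof -
  have fE: "finite EN" using mat by (simp add: matroid_def)
  have fB: "finite B" using fE BE finite_subset by blast
  define U where "U = insert c B"
  have UE: "U \<subseteq> EN" using BE c by (simp add: U_def)
  have cU: "card U = n + 1" using fB c cB by (simp add: U_def)
  define S where "S = EN - U"
  have cS: "card S = card EN - n - 1" using card_Diff_subset[OF _ UE] fE cU
    by (simp add: S_def finite_subset[OF UE])
  have "indep (dual_bases EN \<B>) S" using sp cS unfolding sparse_paving_def paving_def S_def by auto
  then obtain D where D: "D \<in> \<B>" "S \<subseteq> EN - D" unfolding indep_def dual_bases_def by auto
  have DE: "D \<subseteq> EN" using mat D(1) by (simp add: matroid_def)
  have DU: "D \<subseteq> U" using D(2) DE by (auto simp: S_def)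
  have "B - {b} \<subseteq> EN" "card (B - {b}) = n - 1" using BE b cB fB by auto
  then have "indep \<B> (B - {b})" using sp unfolding sparse_paving_def paving_def by blast
  then obtain E1 where E1: "E1 \<in> \<B>" "B - {b} \<subseteq> E1" unfolding indep_def by auto
  have fE1: "finite E1" using E1 mat fE by (meson finite_subset matroid_def)
  have cE1: "card E1 = n" using rk E1 by (simp add: has_rank_def)
  have n1: "n \<ge> 1" using b cB fB by (metis card_0_eq empty_iff less_one not_le)
  have "card (E1 - (B - {b})) = 1" using card_Diff_subset[OF _ E1(2)] cE1 fB b cB n1
    by (simp add: finite_subset)
  then obtain e where e: "E1 - (B - {b}) = {e}" using card_1_singletonE by blast
  have E1eq: "E1 = insert e (B - {b})" using e E1(2) by blast
  have eB: "e \<notin> B - {b}" using e by blast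
  have "e \<noteq> b" using E1eq E1(1) nB b eB by (metis insert_Diff)
  then have enB: "e \<notin> B" using eB by blast
  show ?thesis
  proof (cases "e = c")
    case True then show ?thesis using E1eq E1 by simp
  next
    case False
    then have "e \<notin> D" using DU enB by (auto simp: U_def)
    then have "e \<in> E1 - D" using E1eq by simp
    then obtain y where y: "y \<in> D - E1" "insert y (E1 - {e}) \<in> \<B>"
      using mat E1(1) D(1) unfolding matroid_def by blast
    have E1e: "E1 - {e} = B - {b}" using E1eq eB by auto
    have "y \<in> {b, c}" using y(1) DU E1(2) by (auto simp: U_def)
    moreover have "y \<noteq> b" using y(2) E1e nB b by (metis insert_Diff)
    ultimately have "y = c" by simp
    then show ?thesis using y(2) E1e by simp
  qed
qed

theorem corollary2p4:
  fixes EM EN :: "'a::ab_group_add set" and \<B>M \<B>N :: "'a set set" and n :: nat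
  assumes G: "torsion_free_group TYPE('a) \<or> cyclic_prime_order_group TYPE('a)"
    and M: "matroid EM \<B>M" "loopless EM \<B>M" "has_rank \<B>M n"
    and N: "matroid EN \<B>N" "loopless EN \<B>N" "has_rank \<B>N n" "sparse_paving EN \<B>N n"
    and card: "card EM < card EN - 1"
    and zero: "0 \<notin> EN"
  shows "matched EM \<B>M \<B>N"
  unfolding matched_def
proof
  fix A assume A: "A \<in> \<B>M"
  have fEM: "finite EM" using M(1) by (simp add: matroid_def)
  have fEN: "finite EN" using N(1) by (simp add: matroid_def)
  have AEM: "A \<subseteq> EM" using M(1) A by (simp add: matroid_def)
  have fA: "finite A" using AEM fEM finite_subset by blast
  have cA: "card A = n" using M(3) A by (simp add: has_rank_def)
  have gc: "grpcond EM"
  proof -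
    { assume cy: "cyclic_prime_order_group TYPE('a)"
      then have f: "finite (UNIV :: 'a set)" and p: "prime (card (UNIV :: 'a set))"
        by (simp_all add: cyclic_prime_order_group_def)
      have "card EN \<le> card (UNIV :: 'a set)" using f by (simp add: card_mono)
      then have "EM \<noteq> UNIV" using card by auto
      then have ?thesis using f p by (simp add: grpcond_def) }
    then show ?thesis using G by (auto simp: grpcond_def)
  qed
  define S where "S a = {t \<in> EN. a + t \<notin> EM}" for a
  have surplus: "card X + 1 \<le> card (\<Union>(S ` X))" if X: "X \<subseteq> A" "X \<noteq> {}" for X
  proof -
    define C where "C = {t \<in> EN. \<forall>a\<in>X. a + t \<in> EM}"
    have eq: "\<Union>(S ` X) = EN - C" using X(2) by (auto simp: S_def C_def)
    have CE: "C \<subseteq> EN" by (auto simp: C_def)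
    have cd: "card (\<Union>(S ` X)) = card EN - card C"
      unfolding eq by (rule card_Diff_subset) (use CE fEN finite_subset in auto)
    have fX: "finite X" using X fA finite_subset by blast
    have cX: "card X \<le> card EM" using X AEM fEM by (meson card_mono order.trans)
    show ?thesis
    proof (cases "C = {}")
      case True then show ?thesis using cd cX card by simp
    next
      case False
      have "card C + card X \<le> card EM + 1"
        by (rule CD[OF gc fEM _ fX False X(2)]) (use CE fEN finite_subset in \<open>auto simp: C_def add.commute\<close>)
      moreover have "card C \<le> card EN" using CE fEN by (simp add: card_mono)
      ultimately show ?thesis using cd card by linarith
    qed
  qed
  have hallc: "\<forall>X\<subseteq>A. card X \<le> card (\<Union>(S ` X))"
  proof (intro allI impI)
    fix X assume XA: "X \<subseteq> A"
    show "card X \<le> card (\<Union>(S ` X))"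
    proof (cases "X = {}")
      case True then show ?thesis by simp
    next
      case False then show ?thesis using surplus[OF XA False] by simp
    qed
  qed
  obtain \<pi> where pi: "inj_on \<pi> A" "\<forall>a\<in>A. \<pi> a \<in> S a"
    using hall[OF fA fEN _ hallc] by (auto simp: S_def)
  define B where "B = \<pi> ` A"
  have BE: "B \<subseteq> EN" using pi by (auto simp: B_def S_def)
  have cB: "card B = n" using pi cA by (simp add: B_def card_image)
  show "\<exists>BN\<in>\<B>N. basis_matched EM A BN"
  proof (cases "B \<in> \<B>N")
    case True
    moreover have "basis_matched EM A B" unfolding basis_matched_def
      using pi by (auto simp: B_def bij_betw_def S_def)
    ultimately show ?thesis by blast
  next
    case False
    have Ane: "A \<noteq> {}"
    proof
      assume "A = {}"
      then have B0: "B = {}" by (simp add: B_def)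
      obtain D where D: "D \<in> \<B>N" using N(1) by (auto simp: matroid_def)
      have "D \<subseteq> EN" using N(1) D by (simp add: matroid_def)
      then have "finite D" using fEN finite_subset by blast
      moreover have "card D = 0" using N(3) D \<open>A = {}\<close> cA by (simp add: has_rank_def)
      ultimately have "D = {}" by simp
      then show False using D False B0 by simp
    qed
    have "card B < card (\<Union>(S ` A))" using surplus[OF order.refl Ane] cB cA by simp
    then have "\<not> (\<Union>(S ` A)) \<subseteq> B" using BE fEN by (metis card_mono finite_subset not_le)
    then obtain a c where ac: "a \<in> A" "c \<in> S a" "c \<notin> B" by blast
    define \<pi>' where "\<pi>' = \<pi>(a := c)"
    have img: "\<pi>' ` A = insert c (B - {\<pi> a})"
    proof -
      have "\<pi>' ` A = insert c (\<pi> ` (A - {a}))" using ac(1) by (auto simp: \<pi>'_def)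
      moreover have "\<pi> ` (A - {a}) = B - {\<pi> a}" using pi(1) ac(1) by (simp add: B_def inj_on_image_set_diff)
      ultimately show ?thesis by simp
    qed
    have inj': "inj_on \<pi>' A"
    proof -
      have "inj_on \<pi>' (A - {a})" using pi(1) by (auto simp: \<pi>'_def inj_on_def)
      moreover have "\<pi>' a \<notin> \<pi>' ` (A - {a})" using ac pi(1) by (auto simp: \<pi>'_def B_def)
      moreover have "A = insert a (A - {a})" using ac(1) by auto
      ultimately show ?thesis by (metis inj_on_insert Diff_idemp)
    qed
    have Bn: "insert c (B - {\<pi> a}) \<in> \<B>N"
      by (rule sp_exchange[OF N(1) N(3) N(4) BE cB False]) (use ac in \<open>auto simp: B_def S_def\<close>)
    have "basis_matched EM A (insert c (B - {\<pi> a}))" unfolding basis_matched_def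
    proof (intro exI conjI)
      show "bij_betw \<pi>' A (insert c (B - {\<pi> a}))" using inj' img by (simp add: bij_betw_def)
      show "\<forall>x\<in>A. x + \<pi>' x \<notin> EM" using pi ac by (auto simp: \<pi>'_def S_def)
    qed
    then show ?thesis using Bn by blast
  qed
qed
end
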